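(* Let $\lambda\in(\frac16,\frac56)$. For all $n\ge0$, $$\sup_{z\in[0,1]}|F^\lambda_{n+1}(z)-F^\lambda_n(z)|\le\begin{cases}\lambda\left(\frac13+2\lambda\right)^n&\text{if }\lambda\in(\frac16,\frac13),\\ \lambda\left(\frac16+\lambda\right)^n&\text{if }\lambda\in[\frac13,\frac56).\end{cases}$$
   Context: Fix $\lambda>0$. $F^\lambda_0\equiv0$ on $[0,1]$ (one interval of generation $0$). Given $F^\lambda_n$ with its $4^n$ closed intervals of generation $n$ (covering $[0,1]$, disjoint interiors, $F^\lambda_n$ affine on each), on each interval $[a,b]$ of generation $n$, with $\ell=b-a$ and $m$ the slope of $F^\lambda_n$ there, $F^\lambda_{n+1}$ coincides with $F^\lambda_n$ at $a,a+\ell/3,a+2\ell/3,b$, equals $F^\lambda_n(a+\ell/2)+\lambda\ell\sqrt{1+m^2}$ at $a+\ell/2$, and is affine on each of $[a,a+\ell/3],[a+\ell/3,a+\ell/2],[a+\ell/2,a+2\ell/3],[a+2\ell/3,b]$ (generation $n+1$). *)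

theory Defs
  imports Complex_Main
begin

text \<open>A piecewise affine function on [0,1] is represented by its list of nodes
  (x_0,y_0),...,(x_k,y_k) with 0 = x_0 < ... < x_k = 1; consecutive nodes bound
  the intervals of the current generation.\<close>

text \<open>Refinement of one interval [a,b] with end values fa, fb: returns the nodes
  a, a+l/3, a+l/2, a+2l/3 (the right endpoint b is produced by the next segment).\<close>
definition refine_seg :: "real \<Rightarrow> real \<times> real \<Rightarrow> real \<times> real \<Rightarrow> (real \<times> real) list" where
  "refine_seg lam p q =
    (let a = fst p; fa = snd p; b = fst q; fb = snd q; l = b - a; m = (fb - fa) / l
     in [(a, fa),
         (a + l/3, fa + m * (l/3)),
         (a + l/2, fa + m * (l/2) + lam * l * sqrt (1 + m^2)),
         (a + 2*l/3, fa + m * (2*l/3))])"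

fun refine :: "real \<Rightarrow> (real \<times> real) list \<Rightarrow> (real \<times> real) list" where
  "refine lam (p # q # rest) = refine_seg lam p q @ refine lam (q # rest)"
| "refine lam [p] = [p]"
| "refine lam [] = []"

definition nodes :: "real \<Rightarrow> nat \<Rightarrow> (real \<times> real) list" where
  "nodes lam n = (refine lam ^^ n) [(0, 0), (1, 0)]"

fun interp :: "(real \<times> real) list \<Rightarrow> real \<Rightarrow> real" where
  "interp ((a, fa) # (b, fb) # rest) x =
     (if x \<le> b then fa + (fb - fa) / (b - a) * (x - a) else interp ((b, fb) # rest) x)"
| "interp [(a, fa)] x = fa"
| "interp [] x = 0"

definition F :: "real \<Rightarrow> nat \<Rightarrow> real \<Rightarrow> real" where
  "F lam n = interp (nodes lam n)"

end

theory Submission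
  imports Defs
begin

fun incr :: "(real \<times> real) list \<Rightarrow> bool" where
  "incr (p # q # rest) = (fst p < fst q \<and> incr (q # rest))"
| "incr _ = True"

definition seglen :: "real \<times> real \<Rightarrow> real \<times> real \<Rightarrow> real" where
  "seglen p q = sqrt ((fst q - fst p)^2 + (snd q - snd p)^2)"

fun segs_ok :: "real \<Rightarrow> (real \<times> real) list \<Rightarrow> bool" where
  "segs_ok M (p # q # rest) = (seglen p q \<le> M \<and> segs_ok M (q # rest))"
| "segs_ok M _ = True"

lemma interp_Cons2:
  "interp (p # q # rest) z = (if z \<le> fst q then snd p + (snd q - snd p) / (fst q - fst p) * (z - fst p)
      else interp (q # rest) z)"
  by (cases p; cases q) simp

lemma refine_hd: "\<exists>t. refine lam (q # rest) = q # t"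
  by (cases rest) (auto simp: refine_seg_def Let_def)

lemma sqrt_tri: "sqrt (x^2 + (y + c)^2) \<le> sqrt (x^2 + y^2) + \<bar>c\<bar>"
proof -
  have "y * c \<le> \<bar>c\<bar> * sqrt (x^2 + y^2)"
  proof -
    have "\<bar>y\<bar> \<le> sqrt (x^2 + y^2)" by (simp add: real_le_rsqrt)
    then have "\<bar>y\<bar> * \<bar>c\<bar> \<le> sqrt (x^2 + y^2) * \<bar>c\<bar>" by (simp add: mult_right_mono)
    then show ?thesis by (metis abs_ge_self abs_mult mult.commute order_trans)
  qed
  then have "x^2 + (y + c)^2 \<le> (sqrt (x^2 + y^2) + \<bar>c\<bar>)^2"
    by (simp add: power2_eq_square algebra_simps)
  then show ?thesis by (simp add: real_le_lsqrt)
qed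

lemma sl: "l > 0 \<Longrightarrow> l * sqrt (1 + (d / l)^2) = sqrt (l^2 + d^2)"
proof -
  assume l: "l > 0"
  have "l * sqrt (1 + (d / l)^2) = sqrt (l^2 * (1 + (d / l)^2))"
    using l by (simp add: real_sqrt_mult)
  also have "l^2 * (1 + (d / l)^2) = l^2 + d^2" using l by (simp add: field_simps)
  finally show ?thesis .
qed


lemma scale: "sqrt ((k*x)^2 + (k*y)^2) = \<bar>k\<bar> * sqrt (x^2 + y^2)"
proof -
  have "(k*x)^2 + (k*y)^2 = k^2 * (x^2 + y^2)" by (simp add: algebra_simps power2_eq_square)
  then show ?thesis by (simp add: real_sqrt_mult)
qed

lemma seg_setup:
  assumes "a < b"
  shows "lam * (b - a) * sqrt (1 + ((fb - fa) / (b - a))^2) = lam * sqrt ((b-a)^2 + (fb-fa)^2)"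
  using sl[of "b-a" "fb-fa"] assms by (simp add: mult.assoc)

lemma refine_eq:
  assumes "a < b" "refine lam ((b,fb) # rest) = (b,fb) # t"
  shows "refine lam ((a,fa) # (b,fb) # rest) =
    [(a,fa), (a+(b-a)/3, fa + (fb-fa)/(b-a)*((b-a)/3)),
     (a+(b-a)/2, fa + (fb-fa)/(b-a)*((b-a)/2) + lam * sqrt ((b-a)^2 + (fb-fa)^2)),
     (a+2*(b-a)/3, fa + (fb-fa)/(b-a)*(2*(b-a)/3))] @ (b,fb) # t"
  by (simp only: refine.simps refine_seg_def Let_def fst_conv snd_conv assms(2) seg_setup[OF assms(1)] append.simps)

lemma diff_bound:
  "incr ns \<Longrightarrow> segs_ok M ns \<Longrightarrow> 0 \<le> lam \<Longrightarrow> 0 \<le> M \<Longrightarrow> \<bar>interp (refine lam ns) z - interp ns z\<bar> \<le> lam * M"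
proof (induction lam ns rule: refine.induct)
  case (1 lam p q rest)
  obtain a fa where p: "p = (a,fa)" by (cases p)
  obtain b fb where q: "q = (b,fb)" by (cases q)
  obtain t where t: "refine lam (q#rest) = q # t" using refine_hd by blast
  define l where "l = b - a"
  define d where "d = fb - fa"
  define h where "h = lam * sqrt (l^2 + d^2)"
  have ab: "a < b" using 1(2) p q by simp
  have l0: "l > 0" using ab l_def by simp
  have h0: "0 \<le> h" using 1(4) h_def by simp
  have sM: "sqrt (l^2 + d^2) \<le> M" using 1(3) p q l_def d_def by (simp add: seglen_def)
  have hM: "h \<le> lam * M" using sM 1(4) h_def by (simp add: mult_left_mono)
  have eq: "refine lam (p#q#rest) =
    [(a,fa), (a+l/3, fa + d/l*(l/3)), (a+l/2, fa + d/l*(l/2) + h), (a+2*l/3, fa + d/l*(2*l/3))] @ q # t"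
    using refine_eq[OF ab, of lam fb rest t fa] t p q l_def d_def h_def by simp
  have R: "interp (refine lam (p#q#rest)) z =
     (if z \<le> a + l/3 then fa + (fa + d/l*(l/3) - fa)/(a+l/3-a) * (z - a)
      else if z \<le> a + l/2 then (fa + d/l*(l/3)) + ((fa + d/l*(l/2) + h) - (fa + d/l*(l/3)))/(a+l/2-(a+l/3)) * (z - (a+l/3))
      else if z \<le> a + 2*l/3 then (fa + d/l*(l/2) + h) + ((fa + d/l*(2*l/3)) - (fa + d/l*(l/2) + h))/(a+2*l/3-(a+l/2)) * (z - (a+l/2))
      else if z \<le> b then (fa + d/l*(2*l/3)) + (fb - (fa + d/l*(2*l/3)))/(b-(a+2*l/3)) * (z - (a+2*l/3))
      else interp (refine lam (q#rest)) z)"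
    unfolding eq using t q by (simp only: append.simps interp_Cons2 fst_conv snd_conv)
  have L: "interp (p#q#rest) z = (if z \<le> b then fa + d/l*(z-a) else interp (q#rest) z)"
    using p q l_def d_def by (simp add: interp_Cons2)
  show ?case
  proof (cases "z \<le> a + l/3")
    case True
    have e: "fa + (fa + d/l*(l/3) - fa)/(a+l/3-a) * (z - a) = fa + d/l*(z-a)" using l0 by (simp add: field_simps)
    have zb: "z \<le> b" using True l0 l_def by linarith
    have A: "interp (refine lam (p#q#rest)) z = fa + d/l*(z-a)" using R True e by simp
    have B: "interp (p#q#rest) z = fa + d/l*(z-a)" using L zb by simp
    show ?thesis unfolding A B using hM h0 by simp
  next
    case c1: False
    show ?thesis
    proof (cases "z \<le> a + l/2")
      case True
      have e: "(fa + d/l*(l/3)) + ((fa + d/l*(l/2) + h) - (fa + d/l*(l/3)))/(a+l/2-(a+l/3)) * (z - (a+l/3))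
          = fa + d/l*(z-a) + h * (6*(z-a-l/3)/l)" using l0 by (simp add: field_simps)
      have "0 \<le> 6*(z-a-l/3)/l" "6*(z-a-l/3)/l \<le> 1" using l0 c1 True by (simp_all add: field_simps)
      then have "0 \<le> h * (6*(z-a-l/3)/l)" "h * (6*(z-a-l/3)/l) \<le> h"
        using h0 by (metis mult_nonneg_nonneg, metis mult_left_le)
      moreover have zb: "z \<le> b" using True l0 l_def by linarith
      moreover have A: "interp (refine lam (p#q#rest)) z = fa + d/l*(z-a) + h * (6*(z-a-l/3)/l)" using R True c1 e by simp
      moreover have B: "interp (p#q#rest) z = fa + d/l*(z-a)" using L zb by simp
      ultimately show ?thesis using hM by simp
    next
      case c2: False
      show ?thesis
      proof (cases "z \<le> a + 2*l/3")
        case True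
        have e: "(fa + d/l*(l/2) + h) + ((fa + d/l*(2*l/3)) - (fa + d/l*(l/2) + h))/(a+2*l/3-(a+l/2)) * (z - (a+l/2))
          = fa + d/l*(z-a) + h * (6*(a+2*l/3-z)/l)" using l0 by (simp add: field_simps)
        have "0 \<le> 6*(a+2*l/3-z)/l" "6*(a+2*l/3-z)/l \<le> 1" using l0 c2 True by (simp_all add: field_simps)
        then have "0 \<le> h * (6*(a+2*l/3-z)/l)" "h * (6*(a+2*l/3-z)/l) \<le> h"
        using h0 by (metis mult_nonneg_nonneg, metis mult_left_le)
        moreover have zb: "z \<le> b" using True l0 l_def by linarith
        moreover have A: "interp (refine lam (p#q#rest)) z = fa + d/l*(z-a) + h * (6*(a+2*l/3-z)/l)" using R True c1 c2 e by simp
        moreover have B: "interp (p#q#rest) z = fa + d/l*(z-a)" using L zb by simp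
        ultimately show ?thesis using hM by simp
      next
        case c3: False
        show ?thesis
        proof (cases "z \<le> b")
          case True
          have e: "(fa + d/l*(2*l/3)) + (fb - (fa + d/l*(2*l/3)))/(b-(a+2*l/3)) * (z - (a+2*l/3)) = fa + d/l*(z-a)"
          proof -
            have bl: "b = a + l" "fb = fa + d" using l_def d_def by simp_all
            show ?thesis unfolding bl using l0 by (simp add: field_simps)
          qed
          have A: "interp (refine lam (p#q#rest)) z = fa + d/l*(z-a)" using R True c1 c2 c3 e by simp
          have B: "interp (p#q#rest) z = fa + d/l*(z-a)" using L True by simp
          show ?thesis unfolding A B using hM h0 by simp
        next
          case False
          have "\<bar>interp (refine lam (q # rest)) z - interp (q # rest) z\<bar> \<le> lam * M"
            using 1 by simp
          moreover have "\<not> z \<le> a + l/3" "\<not> z \<le> a + l/2" "\<not> z \<le> a + 2*l/3" using False l0 l_def by linarith+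
          ultimately show ?thesis using False R L by simp
        qed
      qed
    qed
  qed
qed simp_all

lemma refine_props:
  "incr ns \<Longrightarrow> segs_ok M ns \<Longrightarrow> 1/6 \<le> lam \<Longrightarrow>
    incr (refine lam ns) \<and> segs_ok ((1/6+lam)*M) (refine lam ns)"
proof (induction lam ns rule: refine.induct)
  case (1 lam p q rest)
  obtain a fa where p: "p = (a,fa)" by (cases p)
  obtain b fb where q: "q = (b,fb)" by (cases q)
  obtain t where t: "refine lam (q#rest) = q # t" using refine_hd by blast
  define l where "l = b - a"
  define d where "d = fb - fa"
  define s where "s = sqrt (l^2 + d^2)"
  define h where "h = lam * s"
  have ab: "a < b" using 1(2) p q by simp
  have l0: "l > 0" using ab l_def by simp
  have s0: "0 \<le> s" using s_def by simp
  have h0: "0 \<le> h" using 1(4) h_def s0 by simp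
  have sM: "s \<le> M" using 1(3) p q l_def d_def s_def by (simp add: seglen_def)
  have eq: "refine lam (p#q#rest) =
    [(a,fa), (a+l/3, fa + d/l*(l/3)), (a+l/2, fa + d/l*(l/2) + h), (a+2*l/3, fa + d/l*(2*l/3))] @ q # t"
    unfolding p q using refine_eq[OF ab t[unfolded q], of fa, folded l_def d_def, folded s_def, folded h_def] .
  have e1: "d/l*(l/3) = d/3" "d/l*(l/2) = d/2" "d/l*(2*l/3) = 2*d/3" using l0 by simp_all
  note eq = eq[unfolded e1]
  have IH: "incr (q # t) \<and> segs_ok ((1/6+lam)*M) (q # t)" using 1 t by simp
  have k: "s * (1/6 + lam) \<le> (1/6+lam) * M" using mult_right_mono[OF sM, of "1/6+lam"] 1(4) by (simp add: mult.commute)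
  have k3: "s * (1/3) \<le> s * (1/6+lam)" using mult_left_mono[of "1/3" "1/6+lam" s] s0 1(4) by simp
  have k4: "s/3 \<le> (1/6+lam)*M" using k k3 by linarith
  have s1: "sqrt ((l/3)^2 + (d/3)^2) = s/3"
    using scale[of "1/3" l d] l0 s_def by (simp add: field_simps)
  have s2: "sqrt ((l/6)^2 + (d/6 + h)^2) \<le> s/6 + h"
    using sqrt_tri[of "l/6" "d/6" h] scale[of "1/6" l d] h0 s_def by (simp add: field_simps)
  have s3: "sqrt ((l/6)^2 + (d/6 + (-h))^2) \<le> s/6 + h"
    using sqrt_tri[of "l/6" "d/6" "-h"] scale[of "1/6" l d] h0 s_def by (simp add: field_simps)
  have g1: "seglen (a,fa) (a+l/3, fa + d/3) \<le> (1/6+lam)*M"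
  proof -
    have "seglen (a,fa) (a+l/3, fa + d/3) = s/3" using s1 by (simp add: seglen_def)
    then show ?thesis using k4 by simp
  qed
  have g2: "seglen (a+l/3, fa + d/3) (a+l/2, fa + d/2 + h) \<le> (1/6+lam)*M"
  proof -
    have "a+l/2 - (a+l/3) = l/6" "fa + d/2 + h - (fa + d/3) = d/6 + h" using l0 by (simp_all add: field_simps)
    then have "seglen (a+l/3, fa + d/3) (a+l/2, fa + d/2 + h) \<le> s/6 + h" using s2 by (simp add: seglen_def)
    then show ?thesis using k h_def by (simp add: algebra_simps)
  qed
  have g3: "seglen (a+l/2, fa + d/2 + h) (a+2*l/3, fa + 2*d/3) \<le> (1/6+lam)*M"
  proof -
    have "a+2*l/3 - (a+l/2) = l/6" "fa + 2*d/3 - (fa + d/2 + h) = d/6 + (-h)" using l0 by (simp_all add: field_simps)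
    then have "seglen (a+l/2, fa + d/2 + h) (a+2*l/3, fa + 2*d/3) \<le> s/6 + h" using s3 by (simp add: seglen_def)
    then show ?thesis using k h_def by (simp add: algebra_simps)
  qed
  have g4: "seglen (a+2*l/3, fa + 2*d/3) q \<le> (1/6+lam)*M"
  proof -
    have bl: "b = a + l" "fb = fa + d" using l_def d_def by simp_all
    have e2: "a + l - (a+2*l/3) = l/3" "fa + d - (fa + 2*d/3) = d/3" by simp_all
    have "seglen (a+2*l/3, fa + 2*d/3) q = s/3" unfolding q bl seglen_def fst_conv snd_conv e2 s1 ..
    then show ?thesis using k4 by simp
  qed
  have ineq: "a < a+l/3" "a+l/3 < a+l/2" "a+l/2 < a+2*l/3" "a+2*l/3 < b" using l0 l_def by linarith+
  have "incr (refine lam (p#q#rest)) \<and> segs_ok ((1/6+lam)*M) (refine lam (p#q#rest))"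
    unfolding eq unfolding q using IH[unfolded q] g1 g2 g3 g4[unfolded q] ineq by simp
  then show ?case by simp
qed simp_all


lemma nodes_props: "1/6 \<le> lam \<Longrightarrow> incr (nodes lam n) \<and> segs_ok ((1/6+lam)^n) (nodes lam n)"
proof (induction n)
  case 0
  then show ?case by (simp add: nodes_def seglen_def)
next
  case (Suc n)
  have "nodes lam (Suc n) = refine lam (nodes lam n)" by (simp add: nodes_def)
  then show ?case using refine_props[of "nodes lam n" "(1/6+lam)^n" lam] Suc by simp
qed

theorem lemma3p6:
  fixes lam :: real and n :: nat
  assumes "1/6 < lam" and "lam < 5/6"
  shows "(SUP z\<in>{0..1}. \<bar>F lam (Suc n) z - F lam n z\<bar>)
           \<le> (if lam < 1/3 then lam * (1/3 + 2*lam) ^ n else lam * (1/6 + lam) ^ n)"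
proof -
  have P: "incr (nodes lam n) \<and> segs_ok ((1/6+lam)^n) (nodes lam n)"
    using nodes_props assms(1) by simp
  have B: "\<bar>F lam (Suc n) z - F lam n z\<bar> \<le> lam * (1/6+lam)^n" for z
  proof -
    have "nodes lam (Suc n) = refine lam (nodes lam n)" by (simp add: nodes_def)
    then show ?thesis unfolding F_def using diff_bound[of "nodes lam n" "(1/6+lam)^n" lam z] P assms(1) by simp
  qed
  have S: "(SUP z\<in>{0..1}. \<bar>F lam (Suc n) z - F lam n z\<bar>) \<le> lam * (1/6+lam)^n"
    by (rule cSUP_least) (use B in auto)
  have "lam * (1/6+lam)^n \<le> lam * (1/3+2*lam)^n"
    using assms by (intro mult_left_mono power_mono) auto
  then show ?thesis using S by auto
qed

end
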